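(* Let $B\subseteq A$ be commutative unital $\mathbb{R}$-algebras, let $Q'\subseteq A$ be an archimedean quadratic module of $A$, and set $Q:=Q'\cap B$. Then the restriction map $p\colon K_{Q',Y_A}\to K_{Q,Y_B}$, $y\mapsto y|_B$, is surjective. Consequently, if moreover $B\subseteq A\subseteq\mathbb{R}^X$ for a set $X$ and $K_{Q',X}=X$, then $m(X)=K_{Q',Y_A}$ implies $m(X)=K_{Q,Y_B}$, and $\overline{m(X)}=K_{Q',Y_A}$ implies $\overline{m(X)}=K_{Q,Y_B}$.
   Context: A quadratic module of a commutative unital $\mathbb{R}$-algebra $C$ is a subset $Q\subseteq C$ with $Q+Q\subseteq Q$, $c^2Q\subseteq Q$ for all $c\in C$, and $1\in Q$; it is archimedean if for every $c\in C$ there is an integer $n\ge1$ with $n+c\in Q$. $Y_C$ is the set of unital $\mathbb{R}$-algebra homomorphisms $C\to\mathbb{R}$, with the weakest topology making all maps $y\mapsto y(c)$ continuous; $K_{Q,Y_C}:=\{y\in Y_C\mid y(g)\ge0\ \forall g\in Q\}$. For $C\subseteq\mathbb{R}^X$: $K_{Q,X}:=\{x\in X\mid g(x)\ge0\ \forall g\in Q\}$ and $m\colon X\to Y_C$, $m(x)(c)=c(x)$; overlines denote closure in $Y_C$. *)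

theory Defs
  imports "HOL-Analysis.Analysis" "HOL-Library.Function_Algebras"
begin

instantiation "fun" :: (type, real_vector) real_vector
begin
definition scaleR_fun :: "real \<Rightarrow> ('a \<Rightarrow> 'b) \<Rightarrow> 'a \<Rightarrow> 'b"
  where "scaleR_fun r f = (\<lambda>x. r *\<^sub>R f x)"
instance
  by standard (auto simp: scaleR_fun_def fun_eq_iff scaleR_add_right scaleR_add_left)
end

instance "fun" :: (type, real_algebra) real_algebra
  by standard (auto simp: scaleR_fun_def times_fun_def fun_eq_iff)

instance "fun" :: (type, real_algebra_1) real_algebra_1 ..

text \<open>Commutative unital R-algebras are modelled as unital subalgebras C of an
  ambient commutative unital real algebra 'a (take C = UNIV for an algebra given as a type).\<close>

definition subalgebra :: "'a::{comm_ring_1,real_algebra_1} set \<Rightarrow> bool" where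
  "subalgebra C \<longleftrightarrow> 0 \<in> C \<and> 1 \<in> C \<and>
     (\<forall>a\<in>C. \<forall>b\<in>C. a + b \<in> C \<and> a * b \<in> C) \<and>
     (\<forall>a\<in>C. - a \<in> C) \<and> (\<forall>r::real. \<forall>a\<in>C. r *\<^sub>R a \<in> C)"

definition quadratic_module :: "'a::{comm_ring_1,real_algebra_1} set \<Rightarrow> 'a set \<Rightarrow> bool" where
  "quadratic_module C Q \<longleftrightarrow> Q \<subseteq> C \<and>
     (\<forall>a\<in>Q. \<forall>b\<in>Q. a + b \<in> Q) \<and>
     (\<forall>c\<in>C. \<forall>g\<in>Q. c\<^sup>2 * g \<in> Q) \<and> 1 \<in> Q"

definition archimedean :: "'a::{comm_ring_1,real_algebra_1} set \<Rightarrow> 'a set \<Rightarrow> bool" where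
  "archimedean C Q \<longleftrightarrow> (\<forall>c\<in>C. \<exists>n::nat. n \<ge> 1 \<and> of_nat n + c \<in> Q)"

text \<open>Y_C: unital R-algebra homomorphisms C \<rightarrow> R, represented as functions
  that are extensional on C (value undefined outside C).\<close>

definition Ychar :: "'a::{comm_ring_1,real_algebra_1} set \<Rightarrow> ('a \<Rightarrow> real) set" where
  "Ychar C = {y. y \<in> extensional C \<and> y 1 = 1 \<and>
     (\<forall>a\<in>C. \<forall>b\<in>C. y (a + b) = y a + y b \<and> y (a * b) = y a * y b) \<and>
     (\<forall>r. \<forall>a\<in>C. y (r *\<^sub>R a) = r * y a)}"

text \<open>The topology on Y_C: weakest making all y \<mapsto> y(c) (c \<in> C) continuous,
  i.e. the subspace topology of the product topology on R^C.\<close>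

definition Ytop :: "'a::{comm_ring_1,real_algebra_1} set \<Rightarrow> ('a \<Rightarrow> real) topology" where
  "Ytop C = subtopology (powertop_real C) (Ychar C)"

definition KY :: "'a::{comm_ring_1,real_algebra_1} set \<Rightarrow> 'a set \<Rightarrow> ('a \<Rightarrow> real) set" where
  "KY C Q = {y \<in> Ychar C. \<forall>g\<in>Q. y g \<ge> 0}"

definition KX :: "'x set \<Rightarrow> ('x \<Rightarrow> real) set \<Rightarrow> 'x set" where
  "KX X Q = {x \<in> X. \<forall>g\<in>Q. g x \<ge> 0}"

definition mmap :: "('x \<Rightarrow> real) set \<Rightarrow> 'x \<Rightarrow> (('x \<Rightarrow> real) \<Rightarrow> real)" where
  "mmap C x = restrict (\<lambda>c. c x) C"

end

theory Submission
  imports Defs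
begin

lemma sub_ofreal: "subalgebra A \<Longrightarrow> of_real r \<in> A"
  unfolding subalgebra_def of_real_def by auto
lemma sub_add: "subalgebra A \<Longrightarrow> a \<in> A \<Longrightarrow> b \<in> A \<Longrightarrow> a + b \<in> A"
  unfolding subalgebra_def by auto
lemma sub_mult: "subalgebra A \<Longrightarrow> a \<in> A \<Longrightarrow> b \<in> A \<Longrightarrow> a * b \<in> A"
  unfolding subalgebra_def by auto
lemma sub_uminus: "subalgebra A \<Longrightarrow> a \<in> A \<Longrightarrow> - a \<in> A"
  unfolding subalgebra_def by auto
lemma sub_diff: "subalgebra A \<Longrightarrow> a \<in> A \<Longrightarrow> b \<in> A \<Longrightarrow> a - b \<in> A"
  using sub_add[of A a "-b"] sub_uminus[of A b] by simp
lemma sub_one: "subalgebra A \<Longrightarrow> 1 \<in> A" unfolding subalgebra_def by auto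
lemma sub_zero: "subalgebra A \<Longrightarrow> 0 \<in> A" unfolding subalgebra_def by auto

lemma qm_sub: "quadratic_module A M \<Longrightarrow> x \<in> M \<Longrightarrow> x \<in> A"
  unfolding quadratic_module_def by auto
lemma qm_add: "quadratic_module A M \<Longrightarrow> a \<in> M \<Longrightarrow> b \<in> M \<Longrightarrow> a + b \<in> M"
  unfolding quadratic_module_def by auto
lemma qm_sq: "quadratic_module A M \<Longrightarrow> c \<in> A \<Longrightarrow> g \<in> M \<Longrightarrow> c\<^sup>2 * g \<in> M"
  unfolding quadratic_module_def by auto
lemma qm_one: "quadratic_module A M \<Longrightarrow> 1 \<in> M"
  unfolding quadratic_module_def by auto
lemma qm_sq1: "quadratic_module A M \<Longrightarrow> c \<in> A \<Longrightarrow> c\<^sup>2 \<in> M"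
  using qm_sq[of A M c 1] qm_one[of A M] by simp
lemma qm_zero: "subalgebra A \<Longrightarrow> quadratic_module A M \<Longrightarrow> 0 \<in> M"
  using qm_sq1[of A M 0] sub_zero[of A] by simp
lemma qm_scale: "subalgebra A \<Longrightarrow> quadratic_module A M \<Longrightarrow> x \<in> M \<Longrightarrow> r \<ge> 0 \<Longrightarrow> of_real r * x \<in> M"
proof -
  assume a: "subalgebra A" "quadratic_module A M" "x \<in> M" "r \<ge> 0"
  have "(of_real (sqrt r))\<^sup>2 * x \<in> M" using qm_sq[OF a(2) sub_ofreal[OF a(1)] a(3)] .
  moreover have "(of_real (sqrt r) :: 'a)\<^sup>2 = of_real r"
    using a(4) by (metis of_real_power real_sqrt_pow2)
  ultimately show ?thesis by simp
qed
lemma qm_const: "subalgebra A \<Longrightarrow> quadratic_module A M \<Longrightarrow> r \<ge> 0 \<Longrightarrow> of_real r \<in> M"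
  using qm_scale[of A M 1 r] qm_one[of A M] by simp
lemma qm_proper_const: "quadratic_module A M \<Longrightarrow> subalgebra A \<Longrightarrow> -1 \<notin> M \<Longrightarrow> of_real r \<in> M \<Longrightarrow> r \<ge> 0"
proof (rule ccontr)
  assume a: "quadratic_module A M" "subalgebra A" "-1 \<notin> M" "of_real r \<in> M" "\<not> r \<ge> 0"
  have "of_real (1 / - r) * of_real r \<in> M" using qm_scale[OF a(2) a(1) a(4), of "1 / - r"] a(5) by simp
  moreover have "of_real (1 / - r) * of_real r = (-1 :: 'a)"
    using a(5) by (simp flip: of_real_mult)
  ultimately show False using a(3) by simp
qed
lemma arch_bound: "archimedean A M \<Longrightarrow> subalgebra A \<Longrightarrow> a \<in> A \<Longrightarrow> \<exists>N::real. N \<ge> 1 \<and> of_real N - a \<in> M"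
proof -
  assume a: "archimedean A M" "subalgebra A" "a \<in> A"
  then obtain n::nat where "n \<ge> 1" "of_nat n + (-a) \<in> M"
    unfolding archimedean_def using sub_uminus by blast
  then show ?thesis by (intro exI[of _ "real n"]) auto
qed
lemma arch_mono: "archimedean A M \<Longrightarrow> M \<subseteq> N \<Longrightarrow> archimedean A N"
  unfolding archimedean_def by blast

locale maxqm =
  fixes A :: "'a::{comm_ring_1,real_algebra_1} set" and M :: "'a set"
  assumes sa: "subalgebra A" and qm: "quadratic_module A M" and ar: "archimedean A M"
    and pr: "-1 \<notin> M"
    and mx: "\<And>N. quadratic_module A N \<Longrightarrow> M \<subseteq> N \<Longrightarrow> -1 \<notin> N \<Longrightarrow> N = M"
begin

definition P where "P = \<Inter>{N. quadratic_module A N}"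

lemma P_qm: "quadratic_module A P"
  unfolding quadratic_module_def P_def using qm sa
  by (auto simp: quadratic_module_def)

lemma P_sub: "P \<subseteq> M" unfolding P_def using qm by auto

lemma P_mult: "s \<in> P \<Longrightarrow> m \<in> M \<Longrightarrow> s * m \<in> M"
proof -
  assume a: "s \<in> P" "m \<in> M"
  let ?T = "{s \<in> A. \<forall>m\<in>M. s * m \<in> M}"
  have "quadratic_module A ?T"
    unfolding quadratic_module_def
  proof (intro conjI ballI)
    fix c g assume "c \<in> A" "g \<in> ?T"
    then show "c\<^sup>2 * g \<in> ?T"
      using qm_sq[OF qm \<open>c \<in> A\<close>] sub_mult[OF sa] qm_sq1[OF qm] qm_sub[OF qm]
      by (auto simp: mult.assoc)
  qed (use qm sa in \<open>auto simp: distrib_right intro: qm_add sub_add sub_one\<close>)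
  then have "P \<subseteq> ?T" unfolding P_def by auto
  then show ?thesis using a by auto
qed

lemma ext: assumes a: "a \<in> A" "a \<notin> M" shows "\<exists>m\<in>M. \<exists>s\<in>P. -1 = m + s * a"
proof -
  let ?N = "{m + s * a | m s. m \<in> M \<and> s \<in> P}"
  have "quadratic_module A ?N"
    unfolding quadratic_module_def
  proof (intro conjI ballI)
    show "?N \<subseteq> A" using qm P_qm a sa by (auto intro: sub_add sub_mult qm_sub)
    fix x y assume "x \<in> ?N" "y \<in> ?N"
    then obtain m1 s1 m2 s2 where "x = m1 + s1 * a" "y = m2 + s2 * a" "m1 \<in> M" "m2 \<in> M" "s1 \<in> P" "s2 \<in> P" by auto
    then show "x + y \<in> ?N"
      by (intro CollectI exI[of _ "m1+m2"] exI[of _ "s1+s2"]) (auto simp: algebra_simps intro: qm_add[OF qm] qm_add[OF P_qm])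
  next
    fix c g assume "c \<in> A" "g \<in> ?N"
    then obtain m1 s1 where "g = m1 + s1 * a" "m1 \<in> M" "s1 \<in> P" by auto
    moreover have "c\<^sup>2 * m1 \<in> M" "c\<^sup>2 * s1 \<in> P" using \<open>c \<in> A\<close> calculation
      by (auto intro: qm_sq[OF qm] qm_sq[OF P_qm])
    moreover have "c\<^sup>2 * g = c\<^sup>2 * m1 + (c\<^sup>2 * s1) * a" using calculation(1) by (simp add: algebra_simps)
    ultimately show "c\<^sup>2 * g \<in> ?N" by blast
  next
    show "1 \<in> ?N" using qm_one[OF qm] qm_zero[OF sa P_qm]
      by (intro CollectI exI[of _ 1] exI[of _ 0]) auto
  qed
  moreover have "M \<subseteq> ?N" using qm_zero[OF sa P_qm] by force
  moreover have "a \<in> ?N" using qm_zero[OF sa qm] qm_one[OF P_qm]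
    by (intro CollectI exI[of _ 0] exI[of _ 1]) auto
  ultimately have "-1 \<in> ?N" using mx[of ?N] a by blast
  then show ?thesis by auto
qed

lemma supp_ideal: assumes "x \<in> M" "-x \<in> M" "a \<in> A" shows "a * x \<in> M"
proof -
  let ?c1 = "of_real (1/2) * (a + 1)" and ?c2 = "of_real (1/2) * (a - 1)"
  have c: "?c1 \<in> A" "?c2 \<in> A" using sa assms by (auto intro: sub_mult sub_ofreal sub_add sub_diff sub_one)
  have "?c1\<^sup>2 * x + ?c2\<^sup>2 * (-x) \<in> M"
    using qm_add[OF qm qm_sq[OF qm c(1) assms(1)] qm_sq[OF qm c(2) assms(2)]] .
  moreover have "?c1\<^sup>2 * x + ?c2\<^sup>2 * (-x) = (of_real (1/4) * 4) * a * x"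
    by (simp add: power2_eq_square algebra_simps flip: of_real_mult)
  moreover have "(of_real (1/4) * 4 :: 'a) = 1"
  proof -
    have "(of_real (1/4) * 4 :: 'a) = of_real (1/4 * 4)" by (simp only: of_real_mult of_real_numeral)
    then show ?thesis by simp
  qed
  ultimately show ?thesis by simp
qed

lemma total: assumes "a \<in> A" shows "a \<in> M \<or> -a \<in> M"
proof (rule ccontr)
  assume n: "\<not> (a \<in> M \<or> -a \<in> M)"
  obtain m1 s1 where h1: "m1 \<in> M" "s1 \<in> P" "-1 = m1 + s1 * a" using ext assms n by blast
  obtain m2 s2 where h2: "m2 \<in> M" "s2 \<in> P" "-1 = m2 + s2 * (-a)" using ext sub_uminus[OF sa assms] n by blast
  have e1: "m1 = -1 - s1 * a" using h1(3) by (simp add: algebra_simps)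
  have e2: "m2 = -1 + s2 * a" using h2(3) by (simp add: algebra_simps)
  have "-s1 = s2 + s2 * m1 + s1 * m2" unfolding e1 e2 by (simp add: algebra_simps)
  moreover have "s2 + s2 * m1 + s1 * m2 \<in> M"
    using h1 h2 P_sub P_mult by (auto intro!: qm_add[OF qm])
  ultimately have "-s1 \<in> M" by simp
  then have "a * s1 \<in> M" using supp_ideal[of s1 a] P_sub h1 assms by auto
  then have "m1 + s1 * a \<in> M" using h1 by (auto intro: qm_add[OF qm] simp: mult.commute)
  then show False using h1 pr by simp
qed

lemma closed: assumes u: "u \<in> A" and h: "\<And>e. e > 0 \<Longrightarrow> u + of_real e \<in> M" shows "u \<in> M"
proof (rule ccontr)
  assume "u \<notin> M"
  then obtain m s where ms: "m \<in> M" "s \<in> P" "-1 = m + s * u" using ext u by blast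
  have sA: "s \<in> A" using ms P_sub qm_sub[OF qm] by auto
  obtain N where N: "N \<ge> 1" "of_real N - s \<in> M" using arch_bound[OF ar sa sA] by blast
  define e where "e = 1 / (2 * N)"
  have e: "e > 0" using N e_def by simp
  have "s * (u + of_real e) \<in> M" using P_mult[OF ms(2) h[OF e]] .
  then have "m + s * (u + of_real e) \<in> M" using ms by (auto intro: qm_add[OF qm])
  moreover have "of_real e * (of_real N - s) \<in> M" using qm_scale[OF sa qm N(2)] e by simp
  ultimately have "(m + s * (u + of_real e)) + of_real e * (of_real N - s) \<in> M" by (rule qm_add[OF qm])
  moreover have "(m + s * (u + of_real e)) + of_real e * (of_real N - s) = of_real (e * N - 1)"
  proof -
    have "(m + s * (u + of_real e)) + of_real e * (of_real N - s) = (m + s * u) + of_real (e * N)"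
      by (simp add: algebra_simps)
    also have "\<dots> = of_real (e * N - 1)" using ms(3)[symmetric] by simp
    finally show ?thesis .
  qed
  ultimately have "of_real (e * N - 1) \<in> M" by simp
  then have "e * N - 1 \<ge> 0" using qm_proper_const[OF qm sa pr] by blast
  then show False using N unfolding e_def by simp
qed

end

context maxqm begin

definition E where "E a r \<longleftrightarrow> a - of_real r \<in> M \<and> of_real r - a \<in> M"

lemma E_unique: "E a r \<Longrightarrow> E a r' \<Longrightarrow> r = r'"
proof -
  assume "E a r" "E a r'"
  then have "(of_real r - a) + (a - of_real r') \<in> M" "(of_real r' - a) + (a - of_real r) \<in> M"
    unfolding E_def by (blast intro: qm_add[OF qm])+
  then have "of_real (r - r') \<in> M" "of_real (r' - r) \<in> M" by (auto simp: of_real_diff)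
  then have "r - r' \<ge> 0" "r' - r \<ge> 0" by (intro qm_proper_const[OF qm sa pr]; simp)+
  then show ?thesis by simp
qed

lemma E_ex: assumes a: "a \<in> A" shows "E a (Sup {r. a - of_real r \<in> M})"
proof -
  let ?S = "{r. a - of_real r \<in> M}"
  obtain N1 where N1: "of_real N1 - (-a) \<in> M" using arch_bound[OF ar sa sub_uminus[OF sa a]] by blast
  obtain N2 where N2: "of_real N2 - a \<in> M" using arch_bound[OF ar sa a] by blast
  have ne: "-N1 \<in> ?S" using N1 by (simp add: algebra_simps)
  have bd: "r \<le> N2" if "r \<in> ?S" for r
  proof -
    have "(a - of_real r) + (of_real N2 - a) \<in> M" using that N2 qm_add[OF qm] by blast
    then have "of_real (N2 - r) \<in> M" by (simp add: of_real_diff)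
    then have "N2 - r \<ge> 0" by (rule qm_proper_const[OF qm sa pr])
    then show ?thesis by simp
  qed
  have down: "r' \<in> ?S" if "r \<in> ?S" "r' \<le> r" for r r'
  proof -
    have "of_real (r - r') \<in> M" using that qm_const[OF sa qm, of "r - r'"] by simp
    then have "(a - of_real r) + of_real (r - r') \<in> M" using that(1) qm_add[OF qm] by blast
    then show ?thesis by (simp add: of_real_diff)
  qed
  define z where "z = Sup ?S"
  have bdd: "bdd_above ?S" using bd by (auto simp: bdd_above_def)
  have aA: "a - of_real z \<in> A" "of_real z - a \<in> A" using a sa by (auto intro: sub_diff sub_ofreal)
  have "a - of_real z \<in> M"
  proof (rule closed[OF aA(1)])
    fix e :: real assume e: "e > 0"
    have "z - e < Sup ?S" using e unfolding z_def by simp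
    then obtain r where r: "r \<in> ?S" "r > z - e" using less_cSup_iff[OF _ bdd, of "z - e"] ne by blast
    have "z - e \<in> ?S" by (rule down[OF r(1)]) (use r(2) in simp)
    then show "a - of_real z + of_real e \<in> M" by (simp add: of_real_diff algebra_simps)
  qed
  moreover have "of_real z - a \<in> M"
  proof (rule closed[OF aA(2)])
    fix e :: real assume e: "e > 0"
    have "z + e \<notin> ?S" using cSup_upper[OF _ bdd, of "z + e"] e unfolding z_def by force
    moreover have "a - of_real (z + e) \<in> A" by (rule sub_diff[OF sa a sub_ofreal[OF sa]])
    ultimately have "-(a - of_real (z + e)) \<in> M"
      using total[of "a - of_real (z + e)"] by auto
    then have "of_real (z + e) - a \<in> M" by simp
    then show "of_real z - a + of_real e \<in> M" by (simp add: algebra_simps)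
  qed
  ultimately show ?thesis unfolding E_def z_def by blast
qed

lemma E_mult: assumes "E a r" "b \<in> A" shows "b * (a - of_real r) \<in> M" "b * (of_real r - a) \<in> M"
  using supp_ideal[of "a - of_real r" b] supp_ideal[of "of_real r - a" b] assms unfolding E_def
  by (auto simp: algebra_simps)

definition z where "z = restrict (\<lambda>a. Sup {r. a - of_real r \<in> M}) A"

lemma z_E: "a \<in> A \<Longrightarrow> E a (z a)" unfolding z_def using E_ex by simp

lemma z_eq: "a \<in> A \<Longrightarrow> E a r \<Longrightarrow> z a = r" using z_E E_unique by blast

lemma z_char: "z \<in> Ychar A"
  unfolding Ychar_def
proof (intro CollectI conjI ballI allI)
  show "z \<in> extensional A" unfolding z_def by simp
  show "z 1 = 1" by (rule z_eq[OF sub_one[OF sa]]) (simp add: E_def qm_zero[OF sa qm])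
  fix a b assume ab: "a \<in> A" "b \<in> A"
  have Ea: "E a (z a)" and Eb: "E b (z b)" using z_E ab by auto
  show "z (a + b) = z a + z b"
  proof (rule z_eq[OF sub_add[OF sa ab]])
    have "(a - of_real (z a)) + (b - of_real (z b)) \<in> M" "(of_real (z a) - a) + (of_real (z b) - b) \<in> M"
      using Ea Eb unfolding E_def by (auto intro: qm_add[OF qm])
    then show "E (a + b) (z a + z b)" unfolding E_def by (simp add: algebra_simps)
  qed
  show "z (a * b) = z a * z b"
  proof (rule z_eq[OF sub_mult[OF sa ab]])
    have "b * (a - of_real (z a)) + of_real (z a) * (b - of_real (z b)) \<in> M"
         "b * (of_real (z a) - a) + of_real (z a) * (of_real (z b) - b) \<in> M"
      using E_mult[OF Ea ab(2)] E_mult[OF Eb sub_ofreal[OF sa]] by (auto intro: qm_add[OF qm])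
    then show "E (a * b) (z a * z b)" unfolding E_def by (simp add: algebra_simps)
  qed
next
  fix r :: real and a assume a: "a \<in> A"
  have Ea: "E a (z a)" using z_E a by auto
  have raA: "r *\<^sub>R a \<in> A" using sa a unfolding subalgebra_def by auto
  show "z (r *\<^sub>R a) = r * z a"
  proof (rule z_eq[OF raA])
    have "of_real r * (a - of_real (z a)) \<in> M" "of_real r * (of_real (z a) - a) \<in> M"
      using E_mult[OF Ea sub_ofreal[OF sa]] by auto
    then show "E (r *\<^sub>R a) (r * z a)" unfolding E_def by (simp add: algebra_simps scaleR_conv_of_real)
  qed
qed

lemma z_pos: "g \<in> M \<Longrightarrow> z g \<ge> 0"
proof -
  assume g: "g \<in> M"
  then have "E g (z g)" using z_E qm_sub[OF qm] by auto
  then have "(of_real (z g) - g) + g \<in> M" using g unfolding E_def using qm_add[OF qm] by blast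
  then show ?thesis using qm_proper_const[OF qm sa pr] by simp
qed

end

lemma char_exists:
  fixes A :: "'a::{comm_ring_1,real_algebra_1} set"
  assumes sa: "subalgebra A" and qm: "quadratic_module A M" and ar: "archimedean A M"
    and pr: "-1 \<notin> M"
  shows "\<exists>z \<in> Ychar A. \<forall>g\<in>M. z g \<ge> 0"
proof -
  define F where "F = {N. quadratic_module A N \<and> M \<subseteq> N \<and> -1 \<notin> N}"
  have "\<exists>M0\<in>F. \<forall>X\<in>F. M0 \<subseteq> X \<longrightarrow> X = M0"
  proof (rule subset_Zorn_nonempty)
    have "M \<in> F" using qm pr unfolding F_def by blast
    then show "F \<noteq> {}" by blast
    fix C assume C: "C \<noteq> {}" "subset.chain F C"
    have comp: "\<And>X Y. X \<in> C \<Longrightarrow> Y \<in> C \<Longrightarrow> X \<subseteq> Y \<or> Y \<subseteq> X" using C(2)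
      unfolding subset.chain_def by blast
    have sub: "C \<subseteq> F" using C(2) unfolding subset.chain_def by blast
    have subq: "\<And>X. X \<in> C \<Longrightarrow> quadratic_module A X \<and> M \<subseteq> X \<and> -1 \<notin> X"
      using sub unfolding F_def by blast
    have "quadratic_module A (\<Union>C)"
      unfolding quadratic_module_def
    proof (intro conjI ballI)
      show "\<Union>C \<subseteq> A" using subq qm_sub by blast
      obtain X where "X \<in> C" using C(1) by blast
      then show "1 \<in> \<Union>C" using subq qm_one by blast
      fix a b assume "a \<in> \<Union>C" "b \<in> \<Union>C"
      then obtain X Y where XY: "X \<in> C" "Y \<in> C" "a \<in> X" "b \<in> Y" by blast
      then have "(a \<in> Y \<and> b \<in> Y \<and> Y \<in> C) \<or> (a \<in> X \<and> b \<in> X \<and> X \<in> C)" using comp[of X Y] by blast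
      then show "a + b \<in> \<Union>C"
      proof
        assume h: "a \<in> Y \<and> b \<in> Y \<and> Y \<in> C"
        then have "quadratic_module A Y" using subq by blast
        then have "a + b \<in> Y" using h qm_add by blast
        then show ?thesis using h by blast
      next
        assume h: "a \<in> X \<and> b \<in> X \<and> X \<in> C"
        then have "quadratic_module A X" using subq by blast
        then have "a + b \<in> X" using h qm_add by blast
        then show ?thesis using h by blast
      qed
    next
      fix c g assume "c \<in> A" "g \<in> \<Union>C"
      then obtain X where X: "X \<in> C" "g \<in> X" by blast
      then have "quadratic_module A X" using subq by blast
      then have "c\<^sup>2 * g \<in> X" using X \<open>c \<in> A\<close> qm_sq by blast
      then show "c\<^sup>2 * g \<in> \<Union>C" using X by blast
    qed
    moreover have "M \<subseteq> \<Union>C" using subq C(1) by blast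
    moreover have "-1 \<notin> \<Union>C" using subq by blast
    ultimately show "\<Union>C \<in> F" unfolding F_def by blast
  qed
  then obtain M0 where M0: "M0 \<in> F" "\<And>X. X \<in> F \<Longrightarrow> M0 \<subseteq> X \<Longrightarrow> X = M0" by blast
  have M0': "quadratic_module A M0" "M \<subseteq> M0" "-1 \<notin> M0" using M0(1) unfolding F_def by blast+
  interpret maxqm A M0
  proof
    show "subalgebra A" "quadratic_module A M0" "-1 \<notin> M0" by (fact sa M0')+
    show "archimedean A M0" by (rule arch_mono[OF ar M0'(2)])
    fix N assume "quadratic_module A N" "M0 \<subseteq> N" "-1 \<notin> N"
    then show "N = M0" using M0(2)[of N] M0'(2) unfolding F_def by blast
  qed
  show ?thesis using z_char z_pos M0'(2) by blast
qed

lemma Y_add: "y \<in> Ychar C \<Longrightarrow> a \<in> C \<Longrightarrow> b \<in> C \<Longrightarrow> y (a + b) = y a + y b"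
  unfolding Ychar_def by blast
lemma Y_mult: "y \<in> Ychar C \<Longrightarrow> a \<in> C \<Longrightarrow> b \<in> C \<Longrightarrow> y (a * b) = y a * y b"
  unfolding Ychar_def by blast
lemma Y_scale: "y \<in> Ychar C \<Longrightarrow> a \<in> C \<Longrightarrow> y (r *\<^sub>R a) = r * y a"
  unfolding Ychar_def by blast
lemma Y_one: "y \<in> Ychar C \<Longrightarrow> y 1 = 1"
  unfolding Ychar_def by blast
lemma Y_ofreal: "y \<in> Ychar C \<Longrightarrow> subalgebra C \<Longrightarrow> y (of_real r) = r"
  unfolding of_real_def using Y_scale[of y C 1 r] Y_one[of y C] sub_one[of C] by simp
lemma Y_uminus: "y \<in> Ychar C \<Longrightarrow> a \<in> C \<Longrightarrow> y (- a) = - y a"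
  using Y_scale[of y C a "-1"] by simp
lemma Y_diff: "y \<in> Ychar C \<Longrightarrow> subalgebra C \<Longrightarrow> a \<in> C \<Longrightarrow> b \<in> C \<Longrightarrow> y (a - b) = y a - y b"
  using Y_add[of y C a "-b"] Y_uminus[of y C b] sub_uminus[of C b] by simp
lemma Y_sq: "y \<in> Ychar C \<Longrightarrow> a \<in> C \<Longrightarrow> y (a\<^sup>2) = (y a)\<^sup>2"
  using Y_mult[of y C a a] by (simp add: power2_eq_square)
lemma sub_sq: "subalgebra C \<Longrightarrow> a \<in> C \<Longrightarrow> a\<^sup>2 \<in> C"
  using sub_mult[of C a a] by (simp add: power2_eq_square)

lemma ring_sq: "(k::'a::comm_ring_1) * (c + b)\<^sup>2 = k*c\<^sup>2 + (k*2*c)*b + k*b\<^sup>2"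
  by (simp add: power2_eq_square algebra_simps)
lemma ring_sq': "(k::'a::comm_ring_1) * (c - b)\<^sup>2 = k*c\<^sup>2 - (k*2*c)*b + k*b\<^sup>2"
  by (simp add: power2_eq_square algebra_simps)

lemma key_id:
  fixes k D H C a b N1 N2 :: "'a::comm_ring_1"
  assumes h1: "k*2*D = 1" and h2: "k*D^2 = H"
  shows "C*(a + D + b) + k*(D*C - b)^2 + D*(N1 - C) + H*(N2 - C^2) = C*a + (D*N1 + H*N2) + k*b^2"
proof -
  have "C*(a + D + b) + k*(D*C - b)^2 + D*(N1 - C) + H*(N2 - C^2) = C*a + (D*N1 + H*N2) + k*b^2 + C^2*(k*D^2 - H) - C*b*(k*2*D - 1)"
    by (simp add: algebra_simps power2_eq_square)
  then show ?thesis using h1 h2 by simp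
qed

lemma restr_sub:
  assumes sB: "subalgebra B" and BA: "B \<subseteq> A"
  shows "(\<lambda>y. restrict y B) ` KY A Q' \<subseteq> KY B (Q' \<inter> B)"
proof
  fix w assume "w \<in> (\<lambda>y. restrict y B) ` KY A Q'"
  then obtain z where z: "z \<in> Ychar A" "\<forall>g\<in>Q'. z g \<ge> 0" "w = restrict z B"
    unfolding KY_def by blast
  have "w \<in> Ychar B" unfolding Ychar_def z(3)
  proof (intro CollectI conjI ballI allI)
    show "restrict z B \<in> extensional B" by simp
    show "restrict z B 1 = 1" using sub_one[OF sB] Y_one[OF z(1)] by simp
    fix a b assume ab: "a \<in> B" "b \<in> B"
    then show "restrict z B (a + b) = restrict z B a + restrict z B b"
      "restrict z B (a * b) = restrict z B a * restrict z B b"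
      using sub_add[OF sB ab] sub_mult[OF sB ab] Y_add[OF z(1), of a b] Y_mult[OF z(1), of a b] BA ab
      by (auto simp del: restrict_apply) (auto simp: subset_iff)
  next
    fix r :: real and a assume "a \<in> B"
    moreover have "r *\<^sub>R a \<in> B" using sB calculation unfolding subalgebra_def by blast
    ultimately show "restrict z B (r *\<^sub>R a) = r * restrict z B a" using Y_scale[OF z(1)] BA by auto
  qed
  then show "w \<in> KY B (Q' \<inter> B)" using z unfolding KY_def by auto
qed

lemma restr_surj:
  fixes A :: "'a::{comm_ring_1,real_algebra_1} set"
  assumes sA: "subalgebra A" and sB: "subalgebra B" and BA: "B \<subseteq> A"
    and qm: "quadratic_module A Q'" and ar: "archimedean A Q'"
  shows "KY B (Q' \<inter> B) \<subseteq> (\<lambda>y. restrict y B) ` KY A Q'"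
proof
  fix y assume yK: "y \<in> KY B (Q' \<inter> B)"
  have y: "y \<in> Ychar B" "\<And>g. g \<in> Q' \<Longrightarrow> g \<in> B \<Longrightarrow> y g \<ge> 0" using yK unfolding KY_def by auto
  define M where "M = {a \<in> A. \<forall>e>0. \<exists>\<beta>\<in>B. y \<beta> = 0 \<and> a + of_real e + \<beta> \<in> Q'}"
  have BA': "\<And>b. b \<in> B \<Longrightarrow> b \<in> A" using BA by blast
  have QM: "Q' \<subseteq> M"
  proof
    fix a assume a: "a \<in> Q'"
    show "a \<in> M" unfolding M_def
    proof (intro CollectI conjI allI impI)
      show "a \<in> A" using qm_sub[OF qm a] .
      fix e :: real assume "e > 0"
      then have "a + of_real e \<in> Q'" using qm_add[OF qm a qm_const[OF sA qm]] by simp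
      then show "\<exists>\<beta>\<in>B. y \<beta> = 0 \<and> a + of_real e + \<beta> \<in> Q'"
        using sub_zero[OF sB] Y_ofreal[OF y(1) sB, of 0] by (intro bexI[of _ 0]) auto
    qed
  qed
  have qmM: "quadratic_module A M"
    unfolding quadratic_module_def
  proof (intro conjI ballI)
    show "M \<subseteq> A" unfolding M_def by blast
    show "1 \<in> M" using QM qm_one[OF qm] by blast
  next
    fix a b assume ab: "a \<in> M" "b \<in> M"
    show "a + b \<in> M" unfolding M_def
    proof (intro CollectI conjI allI impI)
      show "a + b \<in> A" using ab sub_add[OF sA] unfolding M_def by blast
      fix e :: real assume e: "e > 0"
      have "\<forall>e>0. \<exists>\<beta>\<in>B. y \<beta> = 0 \<and> a + of_real e + \<beta> \<in> Q'" using ab(1) unfolding M_def by blast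
      then have "\<exists>\<beta>\<in>B. y \<beta> = 0 \<and> a + of_real (e/2) + \<beta> \<in> Q'" using e by simp
      then obtain \<beta>1 where b1: "\<beta>1 \<in> B" "y \<beta>1 = 0" "a + of_real (e/2) + \<beta>1 \<in> Q'" by blast
      have "\<forall>e>0. \<exists>\<beta>\<in>B. y \<beta> = 0 \<and> b + of_real e + \<beta> \<in> Q'" using ab(2) unfolding M_def by blast
      then have "\<exists>\<beta>\<in>B. y \<beta> = 0 \<and> b + of_real (e/2) + \<beta> \<in> Q'" using e by simp
      then obtain \<beta>2 where b2: "\<beta>2 \<in> B" "y \<beta>2 = 0" "b + of_real (e/2) + \<beta>2 \<in> Q'" by blast
      have "(a + of_real (e/2) + \<beta>1) + (b + of_real (e/2) + \<beta>2) \<in> Q'" using qm_add[OF qm b1(3) b2(3)] .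
      moreover have "(a + of_real (e/2) + \<beta>1) + (b + of_real (e/2) + \<beta>2) = a + b + of_real e + (\<beta>1 + \<beta>2)"
        by (simp add: algebra_simps flip: of_real_add)
      ultimately show "\<exists>\<beta>\<in>B. y \<beta> = 0 \<and> a + b + of_real e + \<beta> \<in> Q'"
        using b1 b2 sub_add[OF sB b1(1) b2(1)] Y_add[OF y(1) b1(1) b2(1)] by (intro bexI[of _ "\<beta>1 + \<beta>2"]) auto
    qed
  next
    fix c a assume c: "c \<in> A" and a: "a \<in> M"
    show "c\<^sup>2 * a \<in> M" unfolding M_def
    proof (intro CollectI conjI allI impI)
      show "c\<^sup>2 * a \<in> A" using a sub_mult[OF sA sub_sq[OF sA c]] unfolding M_def by blast
      fix e :: real assume e: "e > 0"
      obtain N1 where N1: "N1 \<ge> 1" "of_real N1 - c\<^sup>2 \<in> Q'" using arch_bound[OF ar sA sub_sq[OF sA c]] by blast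
      obtain N2 where N2: "N2 \<ge> 1" "of_real N2 - (c\<^sup>2)\<^sup>2 \<in> Q'"
        using arch_bound[OF ar sA sub_sq[OF sA sub_sq[OF sA c]]] by blast
      define d where "d = e / (N1 + N2/2)"
      have d: "d > 0" using e N1 N2 unfolding d_def by simp
      have "d * N1 + d/2 * N2 = d * (N1 + N2/2)" by (simp add: algebra_simps)
      also have "\<dots> = e" unfolding d_def using N1 N2 by simp
      finally have de: "d * N1 + d/2 * N2 = e" .
      have "\<forall>e>0. \<exists>\<beta>\<in>B. y \<beta> = 0 \<and> a + of_real e + \<beta> \<in> Q'" using a unfolding M_def by blast
      then have "\<exists>\<beta>\<in>B. y \<beta> = 0 \<and> a + of_real d + \<beta> \<in> Q'" using d by simp
      then obtain \<beta> where b: "\<beta> \<in> B" "y \<beta> = 0" "a + of_real d + \<beta> \<in> Q'" by blast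
      have bA: "\<beta> \<in> A" using BA' b(1) .
      let ?X = "c\<^sup>2 * (a + of_real d + \<beta>)"
      let ?W = "of_real (1 / (2*d)) * (of_real d * c\<^sup>2 - \<beta>)\<^sup>2"
      let ?U = "of_real d * (of_real N1 - c\<^sup>2)"
      let ?V = "of_real (d/2) * (of_real N2 - (c\<^sup>2)\<^sup>2)"
      have X: "?X \<in> Q'" using qm_sq[OF qm c b(3)] .
      have W: "?W \<in> Q'"
        using qm_scale[OF sA qm qm_sq1[OF qm sub_diff[OF sA sub_mult[OF sA sub_ofreal[OF sA] sub_sq[OF sA c]] bA]], of "1/(2*d)"] d
        by simp
      have U: "?U \<in> Q'" using qm_scale[OF sA qm N1(2), of d] d by simp
      have V: "?V \<in> Q'" using qm_scale[OF sA qm N2(2), of "d/2"] d by simp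
      have sum: "((?X + ?W) + ?U) + ?V \<in> Q'" using X W U V qm_add[OF qm] by blast
      have w2: "(of_real (1/(2*d)) * 2 * of_real d :: 'a) = 1"
      proof -
        have "(of_real (1/(2*d)) * 2 * of_real d :: 'a) = of_real (1/(2*d) * 2 * d)" by (simp only: of_real_mult of_real_numeral)
        also have "\<dots> = 1" using d by simp
        finally show ?thesis .
      qed
      have w3: "(of_real (1/(2*d)) * (of_real d)\<^sup>2 :: 'a) = of_real (d/2)"
      proof -
        have "(of_real (1/(2*d)) * (of_real d)\<^sup>2 :: 'a) = of_real (1/(2*d) * d\<^sup>2)" by (simp only: of_real_mult of_real_power)
        also have "1/(2*d) * d\<^sup>2 = d/2" using d by (simp add: power2_eq_square)
        finally show ?thesis .
      qed
      have "((?X + ?W) + ?U) + ?V = c\<^sup>2 * a + (of_real d * of_real N1 + of_real (d/2) * of_real N2) + of_real (1/(2*d)) * \<beta>\<^sup>2"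
        using key_id[OF w2 w3, of "c\<^sup>2" a \<beta> "of_real N1" "of_real N2"] by (simp add: mult.commute)
      also have "of_real d * of_real N1 + of_real (d/2) * of_real N2 = (of_real e :: 'a)"
        using de by (simp flip: of_real_mult of_real_add)
      finally have eq: "((?X + ?W) + ?U) + ?V = c\<^sup>2 * a + of_real e + of_real (1/(2*d)) * \<beta>\<^sup>2" .
      have bB: "of_real (1/(2*d)) * \<beta>\<^sup>2 \<in> B" using sub_mult[OF sB sub_ofreal[OF sB] sub_sq[OF sB b(1)]] .
      have yb: "y (of_real (1/(2*d)) * \<beta>\<^sup>2) = 0"
        using Y_mult[OF y(1) sub_ofreal[OF sB] sub_sq[OF sB b(1)]] Y_sq[OF y(1) b(1)] b(2) by simp
      show "\<exists>\<beta>\<in>B. y \<beta> = 0 \<and> c\<^sup>2 * a + of_real e + \<beta> \<in> Q'"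
        using sum eq bB yb by (intro bexI[of _ "of_real (1/(2*d)) * \<beta>\<^sup>2"]) auto
    qed
  qed
  have prM: "-1 \<notin> M"
  proof
    assume "-1 \<in> M"
    then have "\<forall>e>0. \<exists>\<beta>\<in>B. y \<beta> = 0 \<and> -1 + of_real e + \<beta> \<in> Q'" unfolding M_def by blast
    then have "\<exists>\<beta>\<in>B. y \<beta> = 0 \<and> -1 + of_real (1/2) + \<beta> \<in> Q'" by simp
    then obtain \<beta> where b: "\<beta> \<in> B" "y \<beta> = 0" "-1 + of_real (1/2) + \<beta> \<in> Q'" by blast
    have inB: "-1 + of_real (1/2) + \<beta> \<in> B" using sub_add[OF sB sub_add[OF sB sub_uminus[OF sB sub_one[OF sB]] sub_ofreal[OF sB]] b(1)] .
    have "y (-1 + of_real (1/2) + \<beta>) = -1/2"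
      using Y_add[OF y(1) sub_add[OF sB sub_uminus[OF sB sub_one[OF sB]] sub_ofreal[OF sB]] b(1)]
        Y_add[OF y(1) sub_uminus[OF sB sub_one[OF sB]] sub_ofreal[OF sB]]
        Y_uminus[OF y(1) sub_one[OF sB]] Y_one[OF y(1)] Y_ofreal[OF y(1) sB] b(2) by simp
    then show False using y(2)[OF b(3) inB] by simp
  qed
  have kerM: "b \<in> M" if b: "b \<in> B" "y b = 0" for b
    unfolding M_def
  proof (intro CollectI conjI allI impI)
    show "b \<in> A" using BA' b(1) .
    fix e :: real assume e: "e > 0"
    let ?\<beta> = "of_real (1/(4*e)) * b\<^sup>2"
    have "of_real (1/(4*e)) * (of_real (2*e) + b)\<^sup>2 \<in> Q'"
      using qm_scale[OF sA qm qm_sq1[OF qm sub_add[OF sA sub_ofreal[OF sA, of "2*e"] BA'[OF b(1)]]], of "1/(4*e)"] e by simp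
    moreover have "(of_real (1/(4*e)) * (of_real (2*e) + b)\<^sup>2 :: 'a) = b + of_real e + ?\<beta>"
    proof -
      have "(of_real (1/(4*e)) * (of_real (2*e) + b)\<^sup>2 :: 'a) = of_real (1/(4*e) * (2*e)\<^sup>2) + of_real (1/(4*e) * 2 * (2*e)) * b + ?\<beta>"
        unfolding ring_sq by (simp only: of_real_mult of_real_power of_real_numeral)
      also have "1/(4*e) * (2*e)\<^sup>2 = e" using e by (simp add: power2_eq_square)
      also have "1/(4*e) * 2 * (2*e) = 1" using e by simp
      finally show ?thesis by (simp add: algebra_simps)
    qed
    ultimately have "b + of_real e + ?\<beta> \<in> Q'" by simp
    moreover have "?\<beta> \<in> B" using sub_mult[OF sB sub_ofreal[OF sB] sub_sq[OF sB b(1)]] .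
    moreover have "y ?\<beta> = 0"
      using Y_mult[OF y(1) sub_ofreal[OF sB] sub_sq[OF sB b(1)]] Y_sq[OF y(1) b(1)] b(2) by simp
    ultimately show "\<exists>\<beta>\<in>B. y \<beta> = 0 \<and> b + of_real e + \<beta> \<in> Q'" by blast
  qed
  obtain z where z: "z \<in> Ychar A" "\<And>g. g \<in> M \<Longrightarrow> z g \<ge> 0"
    using char_exists[OF sA qmM arch_mono[OF ar QM] prM] by blast
  have zK: "z \<in> KY A Q'" using z QM unfolding KY_def by blast
  have "restrict z B = y"
  proof (rule ext)
    fix b
    show "restrict z B b = y b"
    proof (cases "b \<in> B")
      case False
      then show ?thesis using y(1) unfolding Ychar_def extensional_def by auto
    next
      case True
      let ?b = "b - of_real (y b)"
      have bB: "?b \<in> B" "-?b \<in> B" using sub_diff[OF sB True sub_ofreal[OF sB]] sB sub_uminus by blast+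
      have "y ?b = 0" "y (-?b) = 0"
        using Y_diff[OF y(1) sB True sub_ofreal[OF sB]] Y_ofreal[OF y(1) sB] Y_uminus[OF y(1) bB(1)] by simp+
      then have "z ?b \<ge> 0" "z (-?b) \<ge> 0" using z(2) kerM bB by blast+
      moreover have "z (-?b) = - z ?b" using Y_uminus[OF z(1) BA'[OF bB(1)]] .
      moreover have "z ?b = z b - y b"
        using Y_diff[OF z(1) sA BA'[OF True] sub_ofreal[OF sA]] Y_ofreal[OF z(1) sA] by simp
      ultimately show ?thesis using True by simp
    qed
  qed
  then show "y \<in> (\<lambda>y. restrict y B) ` KY A Q'" using zK by blast
qed

lemma mmap_char:
  fixes B :: "('x \<Rightarrow> real) set"
  assumes sB: "subalgebra B" shows "mmap B x \<in> Ychar B"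
  unfolding Ychar_def mmap_def using sub_one[OF sB] sub_add[OF sB] sub_mult[OF sB] sB
  by (auto simp: subalgebra_def scaleR_fun_def)

lemma mmap_restr: "B \<subseteq> A \<Longrightarrow> restrict (mmap A x) B = mmap B x"
  unfolding mmap_def by (auto simp: restrict_def fun_eq_iff)

lemma mmap_KY:
  fixes B :: "('x \<Rightarrow> real) set"
  assumes sB: "subalgebra B" and KX: "KX X Q' = X" and x: "x \<in> X"
  shows "mmap B x \<in> KY B (Q' \<inter> B)"
proof -
  have "\<forall>g\<in>Q'. g x \<ge> 0" using KX x unfolding KX_def by blast
  then show ?thesis using mmap_char[OF sB] unfolding KY_def mmap_def by auto
qed

lemma topspace_Ytop: "topspace (Ytop C) = Ychar C"
  unfolding Ytop_def Ychar_def by (auto simp: PiE_def)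

lemma cont_restr:
  assumes BA: "B \<subseteq> A" and sB: "subalgebra B"
  shows "continuous_map (Ytop A) (Ytop B) (\<lambda>y. restrict y B)"
  unfolding Ytop_def
proof (rule continuous_map_into_subtopology)
  show "continuous_map (subtopology (powertop_real A) (Ychar A)) (powertop_real B) (\<lambda>y. restrict y B)"
    unfolding continuous_map_componentwise
  proof (intro conjI ballI)
    show "(\<lambda>y. restrict y B) ` topspace (subtopology (powertop_real A) (Ychar A)) \<subseteq> extensional B" by auto
    fix k assume k: "k \<in> B"
    have "continuous_map (subtopology (powertop_real A) (Ychar A)) euclideanreal (\<lambda>y. y k)"
      using continuous_map_product_projection[of k A "\<lambda>_. euclideanreal"] k BA
      by (intro continuous_map_from_subtopology) auto
    then show "continuous_map (subtopology (powertop_real A) (Ychar A)) euclideanreal (\<lambda>x. restrict x B k)"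
      using k by simp
  qed
  show "(\<lambda>y. restrict y B) \<in> topspace (subtopology (powertop_real A) (Ychar A)) \<rightarrow> Ychar B"
  proof
    fix w assume "w \<in> topspace (subtopology (powertop_real A) (Ychar A))"
    then have "restrict w B \<in> (\<lambda>y. restrict y B) ` KY A {}"
      using topspace_Ytop[of A, unfolded Ytop_def] unfolding KY_def by auto
    then show "restrict w B \<in> Ychar B" using restr_sub[OF sB BA, of "{}"] unfolding KY_def by blast
  qed
qed

lemma closed_KY: assumes QB: "Q \<subseteq> B" shows "closedin (Ytop B) (KY B Q)"
proof (cases "Q = {}")
  case True
  then show ?thesis unfolding KY_def topspace_Ytop[symmetric] by simp
next
  case False
  have eq: "KY B Q = topspace (Ytop B) \<inter> (\<Inter>g\<in>Q. {y \<in> topspace (Ytop B). y g \<in> {0..}})"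
    unfolding KY_def topspace_Ytop by auto
  have cl: "closedin (Ytop B) {y \<in> topspace (Ytop B). y g \<in> {0..}}" if "g \<in> Q" for g
  proof -
    have gB: "g \<in> B" using that QB by blast
    have "continuous_map (Ytop B) euclideanreal (\<lambda>y. y g)"
      unfolding Ytop_def using continuous_map_product_projection[OF gB, of "\<lambda>_. euclideanreal"]
      by (intro continuous_map_from_subtopology)
    then show ?thesis by (rule closedin_continuous_map_preimage) auto
  qed
  have "closedin (Ytop B) (\<Inter>g\<in>Q. {y \<in> topspace (Ytop B). y g \<in> {0..}})"
    by (rule closedin_INT[OF False cl])
  then show ?thesis unfolding eq by (rule closedin_Int[OF closedin_topspace])
qed

lemma restr_eq:
  fixes A :: "'a::{comm_ring_1,real_algebra_1} set"
  assumes "subalgebra A" "subalgebra B" "B \<subseteq> A" "quadratic_module A Q'" "archimedean A Q'"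
  shows "(\<lambda>y. restrict y B) ` KY A Q' = KY B (Q' \<inter> B)"
  using restr_sub[OF assms(2,3)] restr_surj[OF assms] by blast

theorem proposition3p7:
  shows
  "(\<forall>(A::'a::{comm_ring_1,real_algebra_1} set) B Q'.
      subalgebra A \<and> subalgebra B \<and> B \<subseteq> A \<and>
      quadratic_module A Q' \<and> archimedean A Q' \<longrightarrow>
      (\<lambda>y. restrict y B) ` KY A Q' = KY B (Q' \<inter> B))
   \<and>
   (\<forall>(X::'x set) (A::('x \<Rightarrow> real) set) B Q'.
      subalgebra A \<and> subalgebra B \<and> B \<subseteq> A \<and>
      quadratic_module A Q' \<and> archimedean A Q' \<and> KX X Q' = X \<longrightarrow>
      (mmap A ` X = KY A Q' \<longrightarrow> mmap B ` X = KY B (Q' \<inter> B)) \<and>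
      ((Ytop A) closure_of (mmap A ` X) = KY A Q' \<longrightarrow>
         (Ytop B) closure_of (mmap B ` X) = KY B (Q' \<inter> B)))"
proof (intro conjI allI impI)
  fix A :: "'a::{comm_ring_1,real_algebra_1} set" and B Q'
  assume "subalgebra A \<and> subalgebra B \<and> B \<subseteq> A \<and> quadratic_module A Q' \<and> archimedean A Q'"
  then show "(\<lambda>y. restrict y B) ` KY A Q' = KY B (Q' \<inter> B)" using restr_eq by blast
next
  fix X :: "'x set" and A :: "('x \<Rightarrow> real) set" and B Q'
  assume h: "subalgebra A \<and> subalgebra B \<and> B \<subseteq> A \<and> quadratic_module A Q' \<and> archimedean A Q' \<and> KX X Q' = X"
  then have sA: "subalgebra A" and sB: "subalgebra B" and BA: "B \<subseteq> A" and qm: "quadratic_module A Q'"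
    and ar: "archimedean A Q'" and KX: "KX X Q' = X" by auto
  have P: "(\<lambda>y. restrict y B) ` KY A Q' = KY B (Q' \<inter> B)" using restr_eq[OF sA sB BA qm ar] .
  have mm: "(\<lambda>y. restrict y B) ` (mmap A ` X) = mmap B ` X"
    using mmap_restr[OF BA] by (simp add: image_image)
  have sub: "mmap B ` X \<subseteq> KY B (Q' \<inter> B)" using mmap_KY[OF sB KX] by blast
  {
    assume "mmap A ` X = KY A Q'"
    then show "mmap B ` X = KY B (Q' \<inter> B)" using P mm by simp
  next
    assume cl: "(Ytop A) closure_of (mmap A ` X) = KY A Q'"
    show "(Ytop B) closure_of (mmap B ` X) = KY B (Q' \<inter> B)"
    proof
      show "(Ytop B) closure_of (mmap B ` X) \<subseteq> KY B (Q' \<inter> B)"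
        by (rule closure_of_minimal[OF sub closed_KY]) blast
      have "KY B (Q' \<inter> B) = (\<lambda>y. restrict y B) ` ((Ytop A) closure_of (mmap A ` X))" using P cl by simp
      also have "\<dots> \<subseteq> (Ytop B) closure_of ((\<lambda>y. restrict y B) ` (mmap A ` X))"
        by (rule continuous_map_image_closure_subset[OF cont_restr[OF BA sB]])
      finally show "KY B (Q' \<inter> B) \<subseteq> (Ytop B) closure_of (mmap B ` X)" using mm by simp
    qed
  }
qed

end
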